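(* Let $N$ be the surface described in the context, with $l>0$. Then no configuration $(x_1,x_2)$ with $x_1,x_2$ in the interior $\{(t,\theta):0<t<l\}$ of the cylinder $C\subset N$ is midpoint secure in $N$.
   Context: Construction of $N$: let $C=[0,l]\times S^1$ be the flat cylinder of length $l>0$ and radius $1$, with points written $(t,\theta)$, $t\in[0,l]$, $\theta\in\mathbb{R}/2\pi\mathbb{Z}$. Let $H_0$ and $H_l$ be two hemispheres of the round unit sphere, and let $N$ be obtained by gluing the equator of $H_0$ isometrically to $\{0\}\times S^1$ and the equator of $H_l$ isometrically to $\{l\}\times S^1$, so that $N$ is a closed $C^1$ surface with a piecewise smooth Riemannian metric; geodesics of $N$ are the $C^1$ curves that are geodesics in each of the pieces $C,H_0,H_l$. Conventions: a geodesic has positive finite length and is parametrized by $[0,1]$ proportionally to arclength. $G(x,y)$ is the set of geodesics $\gamma$ with $\gamma(0)=x$, $\gamma(1)=y$. A set $B$ is a midpoint blocking set for $G(x,y)$ if $\gamma(1/2)\in B$ for every $\gamma\in G(x,y)$ (endpoints allowed in $B$); $(x,y)$ is midpoint secure if $G(x,y)$ has a finite midpoint blocking set. *)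

theory Defs
  imports "HOL-Analysis.Analysis"
begin

text \<open>The surface N is realised as the C1 capsule in R^3: the flat cylinder
  x^2+y^2=1, 0<=z<=l (point (t,theta) of C corresponds to (cos theta, sin theta, t)),
  capped by the lower unit hemisphere centred at the origin and the upper unit
  hemisphere centred at (0,0,l). The induced metric is exactly the glued metric.\<close>

definition cyl :: "real \<Rightarrow> (real^3) set" where
  "cyl l = {p. (p$1)\<^sup>2 + (p$2)\<^sup>2 = 1 \<and> 0 \<le> p$3 \<and> p$3 \<le> l}"

definition cyl_int :: "real \<Rightarrow> (real^3) set" where
  "cyl_int l = {p. (p$1)\<^sup>2 + (p$2)\<^sup>2 = 1 \<and> 0 < p$3 \<and> p$3 < l}"

definition hem0 :: "(real^3) set" where
  "hem0 = {p. (p$1)\<^sup>2 + (p$2)\<^sup>2 + (p$3)\<^sup>2 = 1 \<and> p$3 \<le> 0}"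

definition heml :: "real \<Rightarrow> (real^3) set" where
  "heml l = {p. (p$1)\<^sup>2 + (p$2)\<^sup>2 + (p$3 - l)\<^sup>2 = 1 \<and> l \<le> p$3}"

definition surfN :: "real \<Rightarrow> (real^3) set" where
  "surfN l = cyl l \<union> hem0 \<union> heml l"

definition cyl_geod :: "(real \<Rightarrow> real^3) \<Rightarrow> real \<Rightarrow> real \<Rightarrow> bool" where
  "cyl_geod \<gamma> a b \<longleftrightarrow> (\<exists>\<alpha> \<beta> c d. \<forall>s\<in>{a..b}.
      \<gamma> s = vector [cos (\<alpha> + \<beta> * s), sin (\<alpha> + \<beta> * s), c + d * s])"

definition sph_geod :: "real^3 \<Rightarrow> (real \<Rightarrow> real^3) \<Rightarrow> real \<Rightarrow> real \<Rightarrow> bool" where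
  "sph_geod ctr \<gamma> a b \<longleftrightarrow> (\<exists>u v \<omega>. norm u = 1 \<and> norm v = 1 \<and> inner u v = 0 \<and>
      (\<forall>s\<in>{a..b}. \<gamma> s = ctr + cos (\<omega> * s) *\<^sub>R u + sin (\<omega> * s) *\<^sub>R v))"

definition is_geodesic :: "real \<Rightarrow> (real \<Rightarrow> real^3) \<Rightarrow> bool" where
  "is_geodesic l \<gamma> \<longleftrightarrow>
     \<gamma> ` {0..1} \<subseteq> surfN l \<and>
     (\<exists>\<gamma>' L. L > 0 \<and> continuous_on {0..1} \<gamma>' \<and>
        (\<forall>s\<in>{0..1}. (\<gamma> has_vector_derivative \<gamma>' s) (at s within {0..1}) \<and> norm (\<gamma>' s) = L)) \<and>
     (\<forall>a b. 0 \<le> a \<longrightarrow> a \<le> b \<longrightarrow> b \<le> 1 \<longrightarrow>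
        (\<gamma> ` {a..b} \<subseteq> cyl l \<longrightarrow> cyl_geod \<gamma> a b) \<and>
        (\<gamma> ` {a..b} \<subseteq> hem0 \<longrightarrow> sph_geod 0 \<gamma> a b) \<and>
        (\<gamma> ` {a..b} \<subseteq> heml l \<longrightarrow> sph_geod (vector [0, 0, l]) \<gamma> a b))"

definition geods :: "real \<Rightarrow> real^3 \<Rightarrow> real^3 \<Rightarrow> (real \<Rightarrow> real^3) set" where
  "geods l x y = {\<gamma>. is_geodesic l \<gamma> \<and> \<gamma> 0 = x \<and> \<gamma> 1 = y}"

definition midpoint_blocking :: "real \<Rightarrow> real^3 \<Rightarrow> real^3 \<Rightarrow> (real^3) set \<Rightarrow> bool" where
  "midpoint_blocking l x y B \<longleftrightarrow> (\<forall>\<gamma>\<in>geods l x y. \<gamma> (1/2) \<in> B)"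

definition midpoint_secure :: "real \<Rightarrow> real^3 \<Rightarrow> real^3 \<Rightarrow> bool" where
  "midpoint_secure l x y \<longleftrightarrow> (\<exists>B. finite B \<and> midpoint_blocking l x y B)"

end

theory Submission
  imports Defs
begin

lemma vec3_eq: "((vector [a,b,c] :: real^3) = vector [a',b',c']) \<longleftrightarrow> a = a' \<and> b = b' \<and> c = c'"
  by (auto simp: vec_eq_iff forall_3)

lemma vec3_scale: "r *\<^sub>R (vector [a,b,c] :: real^3) = vector [r*a, r*b, r*c]"
  by (simp add: vec_eq_iff forall_3)

lemma vec3_add: "(vector [a,b,c] :: real^3) + vector [a',b',c'] = vector [a+a', b+b', c+c']"
  by (simp add: vec_eq_iff forall_3)

lemma vec3_decomp: "(vector [a,b,c] :: real^3) = a *\<^sub>R axis 1 1 + b *\<^sub>R axis 2 1 + c *\<^sub>R axis 3 1"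
  by (simp add: vec_eq_iff forall_3 axis_def)

lemma norm3: "norm (vector [a,b,c] :: real^3) = sqrt (a\<^sup>2 + b\<^sup>2 + c\<^sup>2)"
  by (simp add: norm_vec_def L2_set_def sum_3)

lemma inner3: "inner (vector [a,b,c] :: real^3) (vector [a',b',c']) = a*a' + b*b' + c*c'"
  by (simp add: inner_vec_def sum_3)

lemma vd3:
  assumes "(a has_real_derivative a') (at s within S)" "(b has_real_derivative b') (at s within S)"
    "(c has_real_derivative c') (at s within S)"
  shows "((\<lambda>s. vector [a s, b s, c s] :: real^3) has_vector_derivative vector [a', b', c']) (at s within S)"
proof -
  have "((\<lambda>s. a s *\<^sub>R axis 1 1 + b s *\<^sub>R axis 2 1 + c s *\<^sub>R axis 3 1 :: real^3) has_vector_derivative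
     a' *\<^sub>R axis 1 1 + b' *\<^sub>R axis 2 1 + c' *\<^sub>R axis 3 1) (at s within S)"
    using assms by (auto intro!: derivative_eq_intros)
  then show ?thesis by (simp add: vec3_decomp)
qed

lemma vd_union:
  assumes "(f has_vector_derivative f') (at x within S)" "(f has_vector_derivative f') (at x within T)"
  shows "(f has_vector_derivative f') (at x within (S \<union> T))"
  using assms unfolding has_vector_derivative_def has_derivative_within Lim_within_Un
  by auto

lemma vd_far:
  assumes "x \<notin> closure S"
  shows "(f has_vector_derivative f') (at x within S)"
proof -
  have "at x within S = bot" using assms by (simp add: not_in_closure_trivial_limitI trivial_limit_def)
  then show ?thesis unfolding has_vector_derivative_def has_derivative_within
    by (auto intro: bounded_linear_scaleR_left)
qed


locale capg =
  fixes l th z1 z2 D :: real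
  assumes z1: "0 < z1" "z1 < l" and z2: "0 < z2" "z2 < l"
begin

definition "h = 2 * l - z1 - z2"
definition "R = sqrt (D\<^sup>2 + h\<^sup>2)"
definition "u = D / R"
definition "v = h / R"
definition "A = (l - z1) * R / h"
definition "Lam = R + pi"
definition "s1 = A / Lam"
definition "s2 = (A + pi) / Lam"
definition "phi = th + u * A"
definition "a3 = phi + pi - u * (A + pi)"
definition "c3 = l + v * (A + pi)"

lemma hpos: "h > 0" using z1 z2 by (simp add: h_def)
lemma Rpos: "R > 0" using hpos by (simp add: R_def add_nonneg_pos)
lemma vpos: "v > 0" using hpos Rpos by (simp add: v_def)
lemma uv: "u\<^sup>2 + v\<^sup>2 = 1"
proof -
  have "R\<^sup>2 = D\<^sup>2 + h\<^sup>2" unfolding R_def by (simp add: add_nonneg_nonneg)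
  then show ?thesis using Rpos hpos by (simp add: u_def v_def power_divide add_divide_distrib[symmetric])
qed
lemma vA: "v * A = l - z1" using hpos Rpos by (simp add: v_def A_def field_simps)
lemma uR: "u * R = D" using Rpos by (simp add: u_def)
lemma vR: "v * R = h" using Rpos by (simp add: v_def)
lemma Apos: "A > 0" using z1 hpos Rpos by (simp add: A_def)
lemma AR: "A < R" using z1 z2 hpos Rpos by (simp add: A_def h_def field_simps)
lemma Lampos: "Lam > 0" using Rpos by (simp add: Lam_def add_pos_pos)
lemma s1pos: "0 < s1" using Apos Lampos by (simp add: s1_def)
lemma s12: "s1 < s2" using Lampos by (simp add: s1_def s2_def divide_strict_right_mono)
lemma s2lt1: "s2 < 1" using AR Lampos by (simp add: s2_def Lam_def)
lemma Lams1: "Lam * s1 = A" using Lampos by (simp add: s1_def)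
lemma Lams2: "Lam * s2 = A + pi" using Lampos by (simp add: s2_def)

definition "H1 s = (vector [cos (th + (u * Lam) * s), sin (th + (u * Lam) * s), z1 + (v * Lam) * s] :: real^3)"
definition "H1' s = (vector [-(u * Lam) * sin (th + (u * Lam) * s), (u * Lam) * cos (th + (u * Lam) * s), v * Lam] :: real^3)"
definition "C s = (vector [cos (Lam * s - A) * cos phi - sin (Lam * s - A) * u * sin phi,
    cos (Lam * s - A) * sin phi + sin (Lam * s - A) * u * cos phi, l + sin (Lam * s - A) * v] :: real^3)"
definition "C' s = (vector [Lam * (- sin (Lam * s - A) * cos phi - cos (Lam * s - A) * u * sin phi),
    Lam * (- sin (Lam * s - A) * sin phi + cos (Lam * s - A) * u * cos phi), Lam * (cos (Lam * s - A) * v)] :: real^3)"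
definition "H3 s = (vector [cos (a3 + (u * Lam) * s), sin (a3 + (u * Lam) * s), c3 + (-(v * Lam)) * s] :: real^3)"
definition "H3' s = (vector [-(u * Lam) * sin (a3 + (u * Lam) * s), (u * Lam) * cos (a3 + (u * Lam) * s), -(v * Lam)] :: real^3)"

definition "g s = (if s \<le> s1 then H1 s else if s \<le> s2 then C s else H3 s)"
definition "g' s = (if s \<le> s1 then H1' s else if s \<le> s2 then C' s else H3' s)"

lemma H1C: "H1 s1 = C s1" "H1' s1 = C' s1"
proof -
  have 1: "th + u * Lam * s1 = phi" using Lams1 by (simp add: phi_def mult.assoc)
  have 2: "z1 + v * Lam * s1 = l" using Lams1 vA by (simp add: mult.assoc)
  have 3: "Lam * s1 - A = 0" using Lams1 by simp
  show "H1 s1 = C s1" "H1' s1 = C' s1" unfolding H1_def C_def H1'_def C'_def vec3_eq 1 2 3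
    by simp_all
qed

lemma CH3: "C s2 = H3 s2" "C' s2 = H3' s2"
proof -
  have 0: "a3 + u * Lam * s2 = phi + pi" using Lams2 by (simp add: a3_def mult.assoc)
  have 1: "Lam * s2 - A = pi" using Lams2 by simp
  have 2: "c3 + - (v * Lam) * s2 = l" using Lams2 by (simp add: c3_def mult.assoc)
  show "C s2 = H3 s2" "C' s2 = H3' s2" unfolding H3_def C_def H3'_def C'_def vec3_eq 0 1 2
    by simp_all
qed

lemma g_H1: "s \<le> s1 \<Longrightarrow> g s = H1 s" "s \<le> s1 \<Longrightarrow> g' s = H1' s"
  by (simp_all add: g_def g'_def)
lemma g_C: "s1 \<le> s \<Longrightarrow> s \<le> s2 \<Longrightarrow> g s = C s" "s1 \<le> s \<Longrightarrow> s \<le> s2 \<Longrightarrow> g' s = C' s"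
  using H1C by (auto simp: g_def g'_def)
lemma g_H3: "s2 \<le> s \<Longrightarrow> g s = H3 s" "s2 \<le> s \<Longrightarrow> g' s = H3' s"
  using CH3 s12 by (auto simp: g_def g'_def)

lemma H1z: "H1 s $ 3 = z1 + v * (Lam * s)" by (simp add: H1_def)
lemma Cz: "C s $ 3 = l + sin (Lam * s - A) * v" by (simp add: C_def)
lemma H3z: "H3 s $ 3 = l - v * (Lam * s - A - pi)" by (simp add: H3_def c3_def algebra_simps)

lemma H1z_bounds: assumes "0 \<le> s" "s \<le> s1" shows "z1 \<le> H1 s $ 3" "H1 s $ 3 \<le> l" "s < s1 \<Longrightarrow> H1 s $ 3 < l"
proof -
  have "0 \<le> Lam * s" "Lam * s \<le> A" using assms Lampos Lams1
    by (auto intro: mult_left_mono[of s s1 Lam, simplified Lams1])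
  moreover have "s < s1 \<Longrightarrow> Lam * s < A" using Lampos Lams1 by (metis mult_strict_left_mono)
  moreover have "v * (Lam * s) \<le> v * A" if "Lam * s \<le> A" using that vpos by (simp add: mult_left_mono)
  moreover have "v * (Lam * s) < v * A" if "Lam * s < A" using that vpos by (simp add: mult_strict_left_mono)
  ultimately show "z1 \<le> H1 s $ 3" "H1 s $ 3 \<le> l" "s < s1 \<Longrightarrow> H1 s $ 3 < l"
    using vpos vA unfolding H1z
    by (auto simp: mult_nonneg_nonneg)
qed

lemma H3z_bounds: assumes "s2 \<le> s" "s \<le> 1" shows "z2 \<le> H3 s $ 3" "H3 s $ 3 \<le> l" "s2 < s \<Longrightarrow> H3 s $ 3 < l"
proof -
  have a: "A + pi \<le> Lam * s" using assms Lampos Lams2 by (metis mult_left_mono less_imp_le)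
  have b: "Lam * s \<le> Lam" using assms Lampos by (simp add: mult_left_le)
  have c: "s2 < s \<Longrightarrow> A + pi < Lam * s" using Lampos Lams2 by (metis mult_strict_left_mono)
  have d: "v * (Lam - A - pi) = l - z2" using vR vA unfolding Lam_def h_def by (simp add: algebra_simps)
  have "v * (Lam * s - A - pi) \<le> v * (Lam - A - pi)" using b vpos by (intro mult_left_mono) auto
  then show "z2 \<le> H3 s $ 3" unfolding H3z d by simp
  show "H3 s $ 3 \<le> l" unfolding H3z using a vpos by simp
  show "s2 < s \<Longrightarrow> H3 s $ 3 < l" unfolding H3z using c vpos by simp
qed

lemma Cz_bounds: assumes "s1 \<le> s" "s \<le> s2" shows "l \<le> C s $ 3" "s1 < s \<Longrightarrow> s < s2 \<Longrightarrow> l < C s $ 3"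
proof -
  have a: "0 \<le> Lam * s - A" "Lam * s - A \<le> pi" using assms Lampos Lams1 Lams2
    by (metis diff_ge_0_iff_ge mult_left_mono less_imp_le, metis diff_le_eq add.commute mult_left_mono less_imp_le)
  show "l \<le> C s $ 3" unfolding Cz using a vpos by (simp add: sin_ge_zero)
  have "s1 < s \<Longrightarrow> s < s2 \<Longrightarrow> 0 < Lam * s - A \<and> Lam * s - A < pi" using Lampos Lams1 Lams2
    by (metis diff_gt_0_iff_gt diff_less_eq add.commute mult_strict_left_mono)
  then show "s1 < s \<Longrightarrow> s < s2 \<Longrightarrow> l < C s $ 3" unfolding Cz using vpos by (simp add: sin_gt_zero)
qed

lemma sph_id: fixes c sn cp sp u v :: real
  assumes "cp\<^sup>2 + sp\<^sup>2 = 1" "u\<^sup>2 + v\<^sup>2 = 1" "c\<^sup>2 + sn\<^sup>2 = 1"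
  shows "(c * cp - sn * u * sp)\<^sup>2 + (c * sp + sn * u * cp)\<^sup>2 + (sn * v)\<^sup>2 = 1"
  using assms by algebra

lemma g_in: assumes "0 \<le> s" "s \<le> 1" shows "g s \<in> surfN l" "0 < g s $ 3"
proof -
  consider "s \<le> s1" | "s1 \<le> s" "s \<le> s2" | "s2 \<le> s" by linarith
  then have "g s \<in> surfN l \<and> 0 < g s $ 3"
  proof cases
    case 1
    then show ?thesis using H1z_bounds[of s] assms z1 g_H1
      by (auto simp: surfN_def cyl_def H1_def)
  next
    case 2
    have "(C s $ 1)\<^sup>2 + (C s $ 2)\<^sup>2 + (C s $ 3 - l)\<^sup>2 = 1"
      using sph_id[of "cos phi" "sin phi" u v "cos (Lam * s - A)" "sin (Lam * s - A)"] uv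
      by (simp add: C_def)
    then show ?thesis using Cz_bounds[OF 2] g_C[OF 2] z1
      by (auto simp: surfN_def heml_def)
  next
    case 3
    then show ?thesis using H3z_bounds[of s] assms z2 g_H3
      by (auto simp: surfN_def cyl_def H3_def)
  qed
  then show "g s \<in> surfN l" "0 < g s $ 3" by auto
qed

lemma H1_deriv: "(H1 has_vector_derivative H1' s) (at s within S)"
  unfolding H1_def[abs_def] H1'_def
  by (rule vd3) (auto intro!: derivative_eq_intros)
lemma H3_deriv: "(H3 has_vector_derivative H3' s) (at s within S)"
  unfolding H3_def[abs_def] H3'_def
  by (rule vd3) (auto intro!: derivative_eq_intros)
lemma C_deriv: "(C has_vector_derivative C' s) (at s within S)"
  unfolding C_def[abs_def] C'_def
  by (rule vd3) (auto intro!: derivative_eq_intros simp: algebra_simps)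

lemma piece_deriv:
  assumes "(f has_vector_derivative f' s) (at s within {p..q})" "\<And>t. t \<in> {p..q} \<Longrightarrow> g t = f t"
    "s \<in> {p..q} \<Longrightarrow> g' s = f' s"
  shows "(g has_vector_derivative g' s) (at s within {p..q})"
proof (cases "s \<in> {p..q}")
  case True
  then show ?thesis using assms has_vector_derivative_transform[of s "{p..q}" g f "f' s"] by auto
next
  case False
  then show ?thesis by (intro vd_far) simp
qed

lemma g_deriv: "(g has_vector_derivative g' s) (at s within {0..1})"
proof -
  have U: "{0..1} = {0..s1} \<union> {s1..s2} \<union> {s2..1}" using s1pos s12 s2lt1 by auto
  have 1: "(g has_vector_derivative g' s) (at s within {0..s1})"
    by (rule piece_deriv[where f=H1 and f'=H1', OF H1_deriv]) (auto simp: g_H1)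
  have 2: "(g has_vector_derivative g' s) (at s within {s1..s2})"
    by (rule piece_deriv[where f=C and f'=C', OF C_deriv]) (auto simp: g_C)
  have 3: "(g has_vector_derivative g' s) (at s within {s2..1})"
    by (rule piece_deriv[where f=H3 and f'=H3', OF H3_deriv]) (auto simp: g_H3)
  show ?thesis unfolding U by (intro vd_union 1 2 3)
qed

lemma sc2: "(-(a::real) * sin x)\<^sup>2 + (a * cos x)\<^sup>2 = a\<^sup>2"
  using sin_cos_squared_add[of x] by algebra

lemma cont3: assumes "continuous_on S a" "continuous_on S b" "continuous_on S c"
  shows "continuous_on S (\<lambda>x. vector [a x, b x, c x] :: real^3)"
  unfolding vec3_decomp using assms by (intro continuous_intros)

lemma g'_norm: "norm (g' s) = Lam"
proof -
  have L: "sqrt (Lam\<^sup>2) = Lam" using Lampos by simp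
  have n1: "norm (H1' t) = Lam" for t
  proof -
    have "(-(u * Lam) * sin (th + u * Lam * t))\<^sup>2 + (u * Lam * cos (th + u * Lam * t))\<^sup>2 + (v * Lam)\<^sup>2
       = Lam\<^sup>2 * (u\<^sup>2 + v\<^sup>2)"
      unfolding sc2 by (simp add: power_mult_distrib algebra_simps)
    then show ?thesis unfolding H1'_def norm3 using uv L by simp
  qed
  have n3: "norm (H3' t) = Lam" for t
  proof -
    have "(-(u * Lam) * sin (a3 + u * Lam * t))\<^sup>2 + (u * Lam * cos (a3 + u * Lam * t))\<^sup>2 + (-(v * Lam))\<^sup>2
       = Lam\<^sup>2 * (u\<^sup>2 + v\<^sup>2)"
      unfolding sc2 by (simp add: power_mult_distrib algebra_simps)
    then show ?thesis unfolding H3'_def norm3 using uv L by simp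
  qed
  have n2: "norm (C' t) = Lam" for t
  proof -
    have "(Lam * (- sin (Lam * t - A) * cos phi - cos (Lam * t - A) * u * sin phi))\<^sup>2 +
      (Lam * (- sin (Lam * t - A) * sin phi + cos (Lam * t - A) * u * cos phi))\<^sup>2 + (Lam * (cos (Lam * t - A) * v))\<^sup>2
      = Lam\<^sup>2 * (((- sin (Lam * t - A)) * cos phi - cos (Lam * t - A) * u * sin phi)\<^sup>2 +
      ((- sin (Lam * t - A)) * sin phi + cos (Lam * t - A) * u * cos phi)\<^sup>2 + (cos (Lam * t - A) * v)\<^sup>2)"
      by algebra
    also have "\<dots> = Lam\<^sup>2" by (subst sph_id) (simp_all add: uv)
    finally show ?thesis unfolding C'_def norm3 using L by simp
  qed
  show ?thesis using n1 n2 n3 by (simp add: g'_def)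
qed

lemma g'_cont: "continuous_on {0..1} g'"
proof -
  have U: "{0..1} = ({0..s1} \<union> {s1..s2}) \<union> {s2..1}" using s1pos s12 s2lt1 by auto
  have 1: "continuous_on {0..s1} g'"
    by (rule continuous_on_eq[of _ H1']) (auto simp: H1'_def g_H1 intro!: cont3 continuous_intros)
  have 2: "continuous_on {s1..s2} g'"
    by (rule continuous_on_eq[of _ C']) (auto simp: C'_def g_C intro!: cont3 continuous_intros)
  have 3: "continuous_on {s2..1} g'"
    by (rule continuous_on_eq[of _ H3']) (auto simp: H3'_def g_H3 intro!: cont3 continuous_intros)
  show ?thesis unfolding U by (intro continuous_on_closed_Un 1 2 3) auto
qed

definition "UU = (vector [cos A * cos phi + sin A * u * sin phi, cos A * sin phi - sin A * u * cos phi, - sin A * v] :: real^3)"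
definition "VV = (vector [sin A * cos phi - cos A * u * sin phi, sin A * sin phi + cos A * u * cos phi, cos A * v] :: real^3)"

lemma C_form: "C s = vector [0, 0, l] + cos (Lam * s) *\<^sub>R UU + sin (Lam * s) *\<^sub>R VV"
  unfolding C_def UU_def VV_def vec3_scale vec3_add vec3_eq cos_diff sin_diff
  by (simp add: algebra_simps)

lemma UV: "norm UU = 1" "norm VV = 1" "inner UU VV = 0"
proof -
  have p: "(cos phi)\<^sup>2 + (sin phi)\<^sup>2 = 1" "(cos A)\<^sup>2 + (sin A)\<^sup>2 = 1" by simp_all
  have "(cos A * cos phi + sin A * u * sin phi)\<^sup>2 + (cos A * sin phi - sin A * u * cos phi)\<^sup>2 + (- sin A * v)\<^sup>2 = 1"
    using p uv by algebra
  then show "norm UU = 1" unfolding UU_def norm3 by simp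
  have "(sin A * cos phi - cos A * u * sin phi)\<^sup>2 + (sin A * sin phi + cos A * u * cos phi)\<^sup>2 + (cos A * v)\<^sup>2 = 1"
    using p uv by algebra
  then show "norm VV = 1" unfolding VV_def norm3 by simp
  have "(cos A * cos phi + sin A * u * sin phi) * (sin A * cos phi - cos A * u * sin phi) +
     (cos A * sin phi - sin A * u * cos phi) * (sin A * sin phi + cos A * u * cos phi) + (- sin A * v) * (cos A * v) = 0"
    using p uv by algebra
  then show "inner UU VV = 0" unfolding UU_def VV_def inner3 by simp
qed

lemma g_geod: "is_geodesic l g"
  unfolding is_geodesic_def
proof (intro conjI allI impI)
  show "g ` {0..1} \<subseteq> surfN l" using g_in by auto
  show "\<exists>\<gamma>' L. L > 0 \<and> continuous_on {0..1} \<gamma>' \<and>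
        (\<forall>s\<in>{0..1}. (g has_vector_derivative \<gamma>' s) (at s within {0..1}) \<and> norm (\<gamma>' s) = L)"
    using g'_cont g_deriv g'_norm Lampos by blast
next
  fix a b :: real assume ab: "0 \<le> a" "a \<le> b" "b \<le> 1"
  {
    assume sub: "g ` {a..b} \<subseteq> cyl l"
    have "b \<le> s1 \<or> s2 \<le> a"
    proof (rule ccontr)
      assume "\<not> (b \<le> s1 \<or> s2 \<le> a)"
      define t where "t = (max a s1 + min b s2) / 2"
      have t: "a \<le> t" "t \<le> b" "s1 < t" "t < s2" using \<open>\<not> (b \<le> s1 \<or> s2 \<le> a)\<close> ab s12
        unfolding t_def by auto
      then have "g t \<in> cyl l" using sub by auto
      moreover have "l < g t $ 3" using Cz_bounds[of t] g_C[of t] t by auto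
      ultimately show False by (simp add: cyl_def)
    qed
    then show "cyl_geod g a b"
    proof
      assume "b \<le> s1"
      then show ?thesis unfolding cyl_geod_def
        by (intro exI[of _ th] exI[of _ "u * Lam"] exI[of _ z1] exI[of _ "v * Lam"]) (auto simp: g_H1 H1_def)
    next
      assume "s2 \<le> a"
      then show ?thesis unfolding cyl_geod_def
        by (intro exI[of _ a3] exI[of _ "u * Lam"] exI[of _ c3] exI[of _ "-(v * Lam)"]) (auto simp: g_H3 H3_def)
    qed
  }
  {
    assume sub: "g ` {a..b} \<subseteq> hem0"
    have "g a \<in> hem0" using sub ab by auto
    then show "sph_geod 0 g a b" using g_in[of a] ab by (auto simp: hem0_def)
  }
  {
    assume sub: "g ` {a..b} \<subseteq> heml l"
    have "s1 \<le> a"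
    proof (rule ccontr)
      assume "\<not> s1 \<le> a"
      then have "g a $ 3 < l" using H1z_bounds[of a] g_H1[of a] ab by auto
      moreover have "g a \<in> heml l" using sub ab by auto
      ultimately show False by (simp add: heml_def)
    qed
    moreover have "b \<le> s2"
    proof (rule ccontr)
      assume "\<not> b \<le> s2"
      then have "g b $ 3 < l" using H3z_bounds[of b] g_H3[of b] ab by auto
      moreover have "g b \<in> heml l" using sub ab by auto
      ultimately show False by (simp add: heml_def)
    qed
    ultimately show "sph_geod (vector [0, 0, l]) g a b" unfolding sph_geod_def
      using UV by (intro exI[of _ UU] exI[of _ VV] exI[of _ Lam]) (auto simp: g_C C_form)
  }
qed

lemma g0: "g 0 = vector [cos th, sin th, z1]"
  using s1pos by (simp add: g_H1 H1_def)

lemma g1: "g 1 = vector [cos (th + D + pi), sin (th + D + pi), z2]"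
proof -
  have e1: "a3 + u * Lam * 1 = th + D + pi" using uR by (simp add: a3_def phi_def Lam_def algebra_simps)
  have e2: "c3 + - (v * Lam) * 1 = z2" using vR vA by (simp add: c3_def Lam_def h_def algebra_simps)
  show ?thesis using s2lt1 unfolding g_H3[of 1, OF less_imp_le[OF s2lt1]] H3_def e1 e2 by simp
qed

lemma gmid: assumes "z1 = z2 \<or> v * pi \<le> \<bar>z1 - z2\<bar>"
  shows "g (1/2) $ 3 = (if z1 = z2 then l + v else l - \<bar>z1 - z2\<bar> / 2 + v * pi / 2)"
proof -
  have key: "v * (R - 2 * A) = z1 - z2" using vR vA by (simp add: h_def algebra_simps)
  consider "z1 = z2" | "z1 > z2" "v * pi \<le> z1 - z2" | "z1 < z2" "v * pi \<le> z2 - z1" using assms by linarith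
  then show ?thesis
  proof cases
    case 1
    then have "v * (R - 2 * A) = 0" using key by simp
    then have RA: "R = 2 * A" using vpos by simp
    have m: "Lam * (1/2) - A = pi / 2" using RA by (simp add: Lam_def field_simps)
    have "Lam * s1 \<le> Lam * (1/2)" "Lam * (1/2) \<le> Lam * s2" using m Lams1 Lams2 pi_gt_zero by linarith+
    then have "s1 \<le> 1/2" "1/2 \<le> s2" using Lampos by simp_all
    then show ?thesis using 1 unfolding g_C(1)[OF \<open>s1 \<le> 1/2\<close> \<open>1/2 \<le> s2\<close>] Cz m by simp
  next
    case 2
    have "v * (Lam * (1/2) - A - pi) = (z1 - z2 - v * pi) / 2" using key by (simp add: Lam_def algebra_simps)
    then have h1: "v * (Lam * (1/2) - A - pi) \<ge> 0" using 2 by simp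
    then have "Lam * (1/2) - A - pi \<ge> 0" using vpos by (simp add: zero_le_mult_iff)
    then have "s2 \<le> 1/2" using Lams2 Lampos by (metis diff_ge_0_iff_ge diff_diff_eq mult_le_cancel_left_pos)
    then show ?thesis using 2 unfolding g_H3(1)[OF \<open>s2 \<le> 1/2\<close>] H3z
      using \<open>v * (Lam * (1/2) - A - pi) = (z1 - z2 - v * pi) / 2\<close> by (simp add: field_simps)
  next
    case 3
    have e: "v * (A - Lam * (1/2)) = (z2 - z1 - v * pi) / 2" using key by (simp add: Lam_def algebra_simps)
    then have "v * (A - Lam * (1/2)) \<ge> 0" using 3 by simp
    then have "A - Lam * (1/2) \<ge> 0" using vpos by (simp add: zero_le_mult_iff)
    then have "1/2 \<le> s1" using Lams1 Lampos by (metis diff_ge_0_iff_ge mult_le_cancel_left_pos)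
    have e2: "v * (Lam * (1/2)) = (h + v * pi) / 2" using vR by (simp add: Lam_def algebra_simps)
    show ?thesis using 3 unfolding g_H1(1)[OF \<open>1/2 \<le> s1\<close>] H1z e2 by (simp add: h_def field_simps)
  qed
qed

end

lemma capg_exists:
  fixes l th z1 z2 D :: real
  assumes "0 < z1" "z1 < l" "0 < z2" "z2 < l"
  shows "\<exists>\<gamma>. is_geodesic l \<gamma> \<and> \<gamma> 0 = vector [cos th, sin th, z1] \<and>
     \<gamma> 1 = vector [cos (th + D + pi), sin (th + D + pi), z2] \<and>
     ((z1 = z2 \<or> (2*l - z1 - z2) / sqrt (D\<^sup>2 + (2*l - z1 - z2)\<^sup>2) * pi \<le> \<bar>z1 - z2\<bar>) \<longrightarrow>
      \<gamma> (1/2) $ 3 = (if z1 = z2 then l + (2*l - z1 - z2) / sqrt (D\<^sup>2 + (2*l - z1 - z2)\<^sup>2)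
         else l - \<bar>z1 - z2\<bar> / 2 + (2*l - z1 - z2) / sqrt (D\<^sup>2 + (2*l - z1 - z2)\<^sup>2) * pi / 2))"
proof -
  interpret capg l th z1 z2 D using assms by unfold_locales
  have "v = (2*l - z1 - z2) / sqrt (D\<^sup>2 + (2*l - z1 - z2)\<^sup>2)" by (simp add: v_def R_def h_def)
  then show ?thesis using g_geod g0 g1 gmid by metis
qed

lemma cyl_int_param: assumes "x \<in> cyl_int l"
  obtains t where "x = vector [cos t, sin t, x $ 3]" "0 < x $ 3" "x $ 3 < l"
proof -
  have "(x $ 1)\<^sup>2 + (x $ 2)\<^sup>2 = 1" "0 < x $ 3" "x $ 3 < l" using assms by (auto simp: cyl_int_def)
  then obtain t where "x $ 1 = cos t" "x $ 2 = sin t" using sincos_total_2pi by metis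
  then have "x = vector [cos t, sin t, x $ 3]" by (simp add: vec_eq_iff forall_3)
  then show ?thesis using that \<open>0 < x $ 3\<close> \<open>x $ 3 < l\<close> by blast
qed

theorem lemma4:
  fixes l :: real and x1 x2 :: "real^3"
  assumes "l > 0" and "x1 \<in> cyl_int l" and "x2 \<in> cyl_int l"
  shows "\<not> midpoint_secure l x1 x2"
proof
  assume "midpoint_secure l x1 x2"
  then obtain B where B: "finite B" "\<And>\<gamma>. \<gamma> \<in> geods l x1 x2 \<Longrightarrow> \<gamma> (1/2) \<in> B"
    unfolding midpoint_secure_def midpoint_blocking_def by blast
  obtain t1 where t1: "x1 = vector [cos t1, sin t1, x1 $ 3]" "0 < x1 $ 3" "x1 $ 3 < l"
    using cyl_int_param[OF assms(2)] by blast
  obtain t2 where t2: "x2 = vector [cos t2, sin t2, x2 $ 3]" "0 < x2 $ 3" "x2 $ 3 < l"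
    using cyl_int_param[OF assms(3)] by blast
  define z1 where "z1 = x1 $ 3"
  define z2 where "z2 = x2 $ 3"
  define h where "h = 2*l - z1 - z2"
  define c where "c = t2 - t1 - pi"
  define Dk where "Dk k = c + 2 * pi * real k" for k :: nat
  define vk where "vk k = h / sqrt ((Dk k)\<^sup>2 + h\<^sup>2)" for k
  define F where "F w = (if z1 = z2 then l + w else l - \<bar>z1 - z2\<bar> / 2 + w * pi / 2)" for w
  have hpos: "h > 0" using t1 t2 unfolding h_def z1_def z2_def by simp
  have end2: "vector [cos (t1 + Dk k + pi), sin (t1 + Dk k + pi), z2] = x2" for k
  proof -
    have "t1 + Dk k + pi = t2 + 2 * pi * real k" by (simp add: Dk_def c_def)
    moreover have "cos (2 * pi * real k) = 1" "sin (2 * pi * real k) = 0"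
      using cos_int_2pin[of "int k"] sin_int_2pin[of "int k"] by simp_all
    ultimately show ?thesis using t2 by (simp add: cos_add sin_add z2_def)
  qed
  have "\<forall>k. \<exists>\<gamma>. is_geodesic l \<gamma> \<and> \<gamma> 0 = x1 \<and> \<gamma> 1 = x2 \<and>
      ((z1 = z2 \<or> vk k * pi \<le> \<bar>z1 - z2\<bar>) \<longrightarrow> \<gamma> (1/2) $ 3 = F (vk k))"
  proof
    fix k
    from capg_exists[of z1 l z2 t1 "Dk k"] t1 t2 end2[of k]
    show "\<exists>\<gamma>. is_geodesic l \<gamma> \<and> \<gamma> 0 = x1 \<and> \<gamma> 1 = x2 \<and>
      ((z1 = z2 \<or> vk k * pi \<le> \<bar>z1 - z2\<bar>) \<longrightarrow> \<gamma> (1/2) $ 3 = F (vk k))"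
      unfolding vk_def F_def h_def z1_def z2_def by (simp add: mult.commute) 
  qed
  then obtain G where G: "\<And>k. is_geodesic l (G k)" "\<And>k. G k 0 = x1" "\<And>k. G k 1 = x2"
    "\<And>k. (z1 = z2 \<or> vk k * pi \<le> \<bar>z1 - z2\<bar>) \<Longrightarrow> G k (1/2) $ 3 = F (vk k)"
    by metis
  define M where "M = 1 + h * pi / \<bar>z1 - z2\<bar>"
  obtain K :: nat where K: "(M - c) / (2 * pi) < real K" using reals_Archimedean2 by blast
  have DkM: "M < Dk k" if "K \<le> k" for k
  proof -
    have "M - c < 2 * pi * real K" using K by (simp add: field_simps)
    also have "\<dots> \<le> 2 * pi * real k" using that by simp
    finally show ?thesis by (simp add: Dk_def)
  qed
  have Mpos: "M \<ge> 1" using hpos by (simp add: M_def)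
  have cond: "z1 = z2 \<or> vk k * pi \<le> \<bar>z1 - z2\<bar>" if "K \<le> k" for k
  proof (cases "z1 = z2")
    case False
    have D: "Dk k > 0" "M < Dk k" using DkM[OF that] Mpos by auto
    have "Dk k \<le> sqrt ((Dk k)\<^sup>2 + h\<^sup>2)" by (rule real_le_rsqrt) simp
    moreover have "0 < sqrt ((Dk k)\<^sup>2 + h\<^sup>2)" using hpos by (simp add: add_nonneg_pos)
    ultimately have "vk k \<le> h / Dk k" unfolding vk_def using D hpos by (intro divide_left_mono) auto
    also have "\<dots> \<le> h / M" using D hpos Mpos by (intro divide_left_mono) auto
    finally have "vk k * pi \<le> h / M * pi" by (rule mult_right_mono) simp
    also have "h / M * pi \<le> \<bar>z1 - z2\<bar>"
    proof -
      have "h * pi / \<bar>z1 - z2\<bar> < M" by (simp add: M_def)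
      then have "h * pi < M * \<bar>z1 - z2\<bar>" using False by (simp add: divide_less_eq)
      then show ?thesis using Mpos by (simp add: field_simps)
    qed
    finally show ?thesis by simp
  qed simp
  have vdec: "vk k' < vk k" if "K \<le> k" "k < k'" for k k'
  proof -
    have "0 < Dk k" "Dk k < Dk k'" using DkM[OF that(1)] Mpos that by (auto simp: Dk_def)
    then have "(Dk k)\<^sup>2 < (Dk k')\<^sup>2" by (simp add: power_strict_mono)
    then have "sqrt ((Dk k)\<^sup>2 + h\<^sup>2) < sqrt ((Dk k')\<^sup>2 + h\<^sup>2)" by simp
    moreover have "0 < sqrt ((Dk k)\<^sup>2 + h\<^sup>2)" using hpos by (simp add: add_nonneg_pos)
    ultimately show ?thesis unfolding vk_def using hpos by (simp add: divide_strict_left_mono)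
  qed
  have Finj: "F w \<noteq> F w'" if "w' < w" for w w' using that by (auto simp: F_def)
  have inj: "inj_on (\<lambda>k. G k (1/2)) {K..}"
  proof (rule inj_onI)
    fix k k' assume kk: "k \<in> {K..}" "k' \<in> {K..}" "G k (1/2) = G k' (1/2)"
    show "k = k'"
    proof (rule ccontr)
      assume "k \<noteq> k'"
      then consider "k < k'" | "k' < k" by linarith
      then show False
      proof cases
        case 1
        then have "F (vk k) \<noteq> F (vk k')" using vdec[of k k'] kk by (intro Finj) auto
        then show False using G(4)[OF cond, of k] G(4)[OF cond, of k'] kk by auto
      next
        case 2
        then have "F (vk k') \<noteq> F (vk k)" using vdec[of k' k] kk by (intro Finj) auto
        then show False using G(4)[OF cond, of k] G(4)[OF cond, of k'] kk by auto
      qed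
    qed
  qed
  have "(\<lambda>k. G k (1/2)) ` {K..} \<subseteq> B" using B(2) G(1-3) by (auto simp: geods_def)
  then have "finite ((\<lambda>k. G k (1/2)) ` {K..})" using B(1) finite_subset by blast
  then have "finite {K..}" using finite_imageD inj by blast
  then show False using infinite_Ici by blast
qed

end
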